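(* Let $v$ be an aperiodic infinite word over $\{0,1\}$, with $h(\ell)$ the number of $1$'s among its first $\ell$ digits. If $$\liminf_{\ell\to\infty}\frac{h(\ell)}{\ell}>\frac{\ln2}{\ln3},$$ then $\Phi_{\mathbb{R}}(v)$ exists and $\Phi_{\mathbb{R}}(v)<-1$.
   Context: For an infinite word $v$ over $\{0,1\}$ whose $1$'s are at positions $d_0<d_1<\cdots$ (counted from $0$), $\Phi_{\mathbb{R}}(v)$ is the real sum $-\sum_{i\ge0}2^{d_i}/3^{i+1}$; it exists if the series converges in $\mathbb{R}$. Aperiodic means not eventually periodic. *)

theory Defs
  imports "HOL-Analysis.Analysis" "HOL-Library.Extended_Real"
begin

text \<open>Infinite binary words are functions nat => bool; True encodes the digit 1.\<close>

definition eventually_periodic :: "(nat \<Rightarrow> bool) \<Rightarrow> bool" where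
  "eventually_periodic v \<longleftrightarrow> (\<exists>N p. p > 0 \<and> (\<forall>n\<ge>N. v (n + p) = v n))"

definition aperiodic :: "(nat \<Rightarrow> bool) \<Rightarrow> bool" where
  "aperiodic v \<longleftrightarrow> \<not> eventually_periodic v"

definition ones_count :: "(nat \<Rightarrow> bool) \<Rightarrow> nat \<Rightarrow> nat" where
  "ones_count v l = card {i. i < l \<and> v i}"

text \<open>Position d_i of the i-th 1 (counted from 0).\<close>
definition one_pos :: "(nat \<Rightarrow> bool) \<Rightarrow> nat \<Rightarrow> nat" where
  "one_pos v i = enumerate {j. v j} i"

definition Phi_term :: "(nat \<Rightarrow> bool) \<Rightarrow> nat \<Rightarrow> real" where
  "Phi_term v i = (if infinite {j. v j} \<or> i < card {j. v j}
                   then - (2 ^ one_pos v i) / 3 ^ (i + 1) else 0)"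

definition Phi_R_exists :: "(nat \<Rightarrow> bool) \<Rightarrow> bool" where
  "Phi_R_exists v \<longleftrightarrow> summable (Phi_term v)"

definition Phi_R :: "(nat \<Rightarrow> bool) \<Rightarrow> real" where
  "Phi_R v = (\<Sum>i. Phi_term v i)"

end

theory Submission
  imports Defs
begin

theorem lemma23:
  fixes v :: "nat \<Rightarrow> bool"
  assumes "aperiodic v"
    and "Liminf sequentially (\<lambda>l. ereal (real (ones_count v l) / real l)) > ereal (ln 2 / ln 3)"
  shows "Phi_R_exists v \<and> Phi_R v < -1"
proof -
  define S where "S = {j. v j}"
  define d where "d = enumerate S"
  obtain \<alpha> where a1: "ln 2 / ln 3 < \<alpha>"
    and a2: "ereal \<alpha> < Liminf sequentially (\<lambda>l. ereal (real (ones_count v l) / real l))"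
    using ereal_dense2[OF assms(2)] by auto
  have "eventually (\<lambda>l. ereal \<alpha> < ereal (real (ones_count v l) / real l)) sequentially"
    using less_LiminfD[OF a2] by simp
  then obtain N where N: "\<And>l. l \<ge> N \<Longrightarrow> \<alpha> < real (ones_count v l) / real l"
    by (auto simp: eventually_sequentially)
  have lnpos: "ln 2 / ln 3 > (0::real)" by simp
  hence apos: "\<alpha> > 0" using a1 by linarith
  have N': "\<alpha> * real l < real (ones_count v l)" if "l \<ge> N" "l > 0" for l
    using N[OF that(1)] that(2) by (simp add: field_simps)
  have inf: "infinite S"
  proof
    assume fin: "finite S"
    have le: "ones_count v l \<le> card S" for l
      unfolding ones_count_def S_def using fin[unfolded S_def]
      by (intro card_mono) auto
    obtain l :: nat where l: "real l > real (card S) / \<alpha>" "l \<ge> N" "l > 0"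
    proof -
      obtain m :: nat where "real m > real (card S) / \<alpha>" using reals_Archimedean2 by blast
      thus ?thesis using that[of "m + N + 1"] by auto
    qed
    have "real (card S) < \<alpha> * real l" using l(1) apos by (simp add: field_simps)
    also have "\<dots> < real (ones_count v l)" using N' l by auto
    finally show False using le[of l] by linarith
  qed
  have dS: "d i \<in> S" for i unfolding d_def using enumerate_in_set[OF inf] .
  have dge: "i \<le> d i" for i unfolding d_def using le_enumerate[OF inf] .
  have cnt: "ones_count v (d i + 1) \<le> i + 1" for i
  proof -
    have "{j. j < d i + 1 \<and> v j} \<subseteq> d ` {..i}"
    proof
      fix j assume j: "j \<in> {j. j < d i + 1 \<and> v j}"
      then obtain k where k: "d k = j" using enumerate_Ex[OF inf, of j] by (auto simp: S_def d_def)
      have "k \<le> i"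
      proof (rule ccontr)
        assume "\<not> k \<le> i"
        hence "d i < d k" unfolding d_def using inf by simp
        thus False using j k by simp
      qed
      thus "j \<in> d ` {..i}" using k by auto
    qed
    hence "card {j. j < d i + 1 \<and> v j} \<le> card (d ` {..i})" by (intro card_mono) auto
    also have "\<dots> \<le> i + 1" using card_image_le[of "{..i}" d] by simp
    finally show ?thesis unfolding ones_count_def .
  qed
  have dbound: "real (d i + 1) < real (i + 1) / \<alpha>" if "i \<ge> N" for i
  proof -
    have "\<alpha> * real (d i + 1) < real (ones_count v (d i + 1))"
      using N'[of "d i + 1"] dge[of i] that by auto
    also have "\<dots> \<le> real (i + 1)" using cnt[of i] by linarith
    finally show ?thesis using apos by (simp add: field_simps)
  qed
  define f where "f i = (2::real) ^ d i / 3 ^ (i + 1)" for i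
  have PT: "Phi_term v = (\<lambda>i. - f i)"
    using inf by (auto simp: Phi_term_def f_def one_pos_def S_def d_def fun_eq_iff)
  define r where "r = 2 powr (1 / \<alpha>) / 3"
  have rpos: "r > 0" unfolding r_def by simp
  have r1: "r < 1"
  proof -
    have "1 / \<alpha> < ln 3 / ln 2" using a1 apos by (simp add: field_simps)
    hence "1 / \<alpha> * ln 2 < ln 3" by (simp add: field_simps)
    hence "exp (1 / \<alpha> * ln 2) < exp (ln 3)" by (subst exp_less_cancel_iff)
    hence "2 powr (1 / \<alpha>) < 3" by (simp add: powr_def)
    thus ?thesis unfolding r_def by simp
  qed
  have fbound: "norm (f i) \<le> r ^ (i + 1)" if "i \<ge> N" for i
  proof -
    have "(2::real) ^ d i \<le> 2 ^ (d i + 1)" by simp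
    also have "\<dots> = 2 powr real (d i + 1)" by (rule powr_realpow[symmetric]) simp
    also have "\<dots> \<le> 2 powr (real (i + 1) / \<alpha>)"
      using dbound[OF that] by (intro powr_mono) auto
    also have "\<dots> = (2 powr (1 / \<alpha>)) ^ (i + 1)"
    proof -
      have "(2 powr (1 / \<alpha>)) ^ (i + 1) = (2 powr (1 / \<alpha>)) powr real (i + 1)"
        by (rule powr_realpow[symmetric]) simp
      also have "\<dots> = 2 powr (1 / \<alpha> * real (i + 1))" by (rule powr_powr)
      finally show ?thesis by simp
    qed
    finally have "(2::real) ^ d i \<le> (2 powr (1 / \<alpha>)) ^ (i + 1)" .
    hence "(2::real) ^ d i / 3 ^ (i + 1) \<le> (2 powr (1 / \<alpha>)) ^ (i + 1) / 3 ^ (i + 1)"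
      by (simp add: divide_right_mono)
    thus ?thesis by (simp add: f_def r_def power_divide)
  qed
  have sr: "summable (\<lambda>i. r ^ (i + 1))"
    using summable_geometric[of r] rpos r1 by (simp add: summable_mult)
  have sf: "summable f"
    by (rule summable_comparison_test'[OF sr fbound]) auto
  have ex: "Phi_R_exists v" unfolding Phi_R_exists_def PT using summable_minus[OF sf] .
  define g where "g i = (2/3::real) ^ i / 3" for i
  have gs: "g sums 1"
  proof -
    have "(\<lambda>i. (2/3::real) ^ i) sums (1 / (1 - 2/3))" by (rule geometric_sums) simp
    from sums_mult[OF this, of "1/3"] show ?thesis by (simp add: g_def[abs_def])
  qed
  have fg: "g i \<le> f i" for i
  proof -
    have "(2::real) ^ i \<le> 2 ^ d i" using dge[of i] by (intro power_increasing) auto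
    hence "(2::real) ^ i / 3 ^ (i+1) \<le> 2 ^ d i / 3 ^ (i+1)" by (simp add: divide_right_mono)
    thus ?thesis by (simp add: g_def f_def power_divide)
  qed
  have "\<exists>i. d i \<noteq> i"
  proof (rule ccontr)
    assume "\<not> (\<exists>i. d i \<noteq> i)"
    hence "\<forall>i. v i" using dS by (auto simp: S_def)
    hence "eventually_periodic v" unfolding eventually_periodic_def by (intro exI[of _ 0] exI[of _ 1]) auto
    thus False using assms(1) by (simp add: aperiodic_def)
  qed
  then obtain i where "d i \<noteq> i" by blast
  hence "i < d i" using dge[of i] by simp
  hence "(2::real) ^ i < 2 ^ d i" by simp
  hence "(2::real) ^ i / 3 ^ (i+1) < 2 ^ d i / 3 ^ (i+1)" by (simp add: divide_strict_right_mono)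
  hence fgi: "0 < f i - g i" by (simp add: g_def f_def power_divide)
  have sg: "summable g" using gs sums_summable by blast
  have "0 < suminf (\<lambda>i. f i - g i)"
    using suminf_pos_iff[of "\<lambda>i. f i - g i"] summable_diff[OF sf sg] fg fgi by auto
  hence "suminf g < suminf f" using suminf_diff[OF sf sg] by simp
  hence "1 < suminf f" using sums_unique[OF gs] by simp
  moreover have "Phi_R v = - suminf f" unfolding Phi_R_def PT using suminf_minus[OF sf] .
  ultimately show ?thesis using ex by simp
qed

end
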